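(* Let $k\ge3$, let $G$ be a graph and $L$ a $k$-list assignment for $G$. Let $B$ be a bug in $G$ with root $r$ satisfying $d_G(r)\le k$, and suppose that the number of neighbors of $r$ in $V(G)\setminus V(B)$ is less than $|V(B)|$ and $|V(B)|\le k$. If $B$ has a hidden vertex, then $B$ is safe in $G$.
   Context: $V_{3^+}(G)$ is the set of vertices of degree at least $3$ in $G$. A bug in $G$ is an induced connected subgraph $B$ together with a vertex $r\in V(B)$, its root, such that $V(B)\cap V_{3^+}(G)\subseteq\{r\}$. A vertex $y\in V(B)$ is hidden if $N_G(y)\subseteq V(B)$. A $k$-list assignment $L$ assigns to each vertex $v$ a set $L(v)$ of exactly $k$ colors; an $L$-coloring is a proper vertex coloring $f$ with $f(v)\in L(v)$. For an integer $n$ and $k\ge1$, $n\bmod^* k$ is the unique $m\in\{1,\dots,k\}$ with $n\equiv m\pmod k$. If $|V(G)|=n\ge 1$, an $L$-coloring $f$ of $G$ is strongly equitable (SE) if every color class has at most $\lceil n/k\rceil$ vertices and the number of colors whose class has exactly $\lceil n/k\rceil$ vertices (the full classes) is at most $n\bmod^* k$; the empty graph is regarded as SE $L$-colorable. A subgraph $S\subseteq G$ is safe in $G$ if every SE $L$-coloring of $G-V(S)$ (with the restriction of $L$) can be extended to an SE $L$-coloring of $G$. *)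

theory Defs
  imports Complex_Main
begin

definition simple_graph :: "'a set \<Rightarrow> ('a \<Rightarrow> 'a \<Rightarrow> bool) \<Rightarrow> bool" where
  "simple_graph V E \<longleftrightarrow> finite V \<and> (\<forall>u v. E u v \<longrightarrow> E v u) \<and> (\<forall>v. \<not> E v v)
     \<and> (\<forall>u v. E u v \<longrightarrow> u \<in> V \<and> v \<in> V)"

definition nbrs :: "'a set \<Rightarrow> ('a \<Rightarrow> 'a \<Rightarrow> bool) \<Rightarrow> 'a \<Rightarrow> 'a set" where
  "nbrs V E v = {u \<in> V. E v u}"

definition degree :: "'a set \<Rightarrow> ('a \<Rightarrow> 'a \<Rightarrow> bool) \<Rightarrow> 'a \<Rightarrow> nat" where
  "degree V E v = card (nbrs V E v)"

definition V3plus :: "'a set \<Rightarrow> ('a \<Rightarrow> 'a \<Rightarrow> bool) \<Rightarrow> 'a set" where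
  "V3plus V E = {v \<in> V. degree V E v \<ge> 3}"

definition induced_connected :: "('a \<Rightarrow> 'a \<Rightarrow> bool) \<Rightarrow> 'a set \<Rightarrow> bool" where
  "induced_connected E S \<longleftrightarrow> S \<noteq> {} \<and>
     (\<forall>u\<in>S. \<forall>v\<in>S. (\<lambda>x y. E x y \<and> x \<in> S \<and> y \<in> S)\<^sup>*\<^sup>* u v)"

definition is_bug :: "'a set \<Rightarrow> ('a \<Rightarrow> 'a \<Rightarrow> bool) \<Rightarrow> 'a set \<Rightarrow> 'a \<Rightarrow> bool" where
  "is_bug V E S r \<longleftrightarrow> S \<subseteq> V \<and> induced_connected E S \<and> r \<in> S \<and> S \<inter> V3plus V E \<subseteq> {r}"

definition hidden :: "'a set \<Rightarrow> ('a \<Rightarrow> 'a \<Rightarrow> bool) \<Rightarrow> 'a set \<Rightarrow> 'a \<Rightarrow> bool" where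
  "hidden V E S y \<longleftrightarrow> y \<in> S \<and> nbrs V E y \<subseteq> S"

definition k_list_assignment :: "'a set \<Rightarrow> nat \<Rightarrow> ('a \<Rightarrow> 'c set) \<Rightarrow> bool" where
  "k_list_assignment V k L \<longleftrightarrow> (\<forall>v\<in>V. card (L v) = k \<and> finite (L v))"

definition L_coloring :: "'a set \<Rightarrow> ('a \<Rightarrow> 'a \<Rightarrow> bool) \<Rightarrow> ('a \<Rightarrow> 'c set) \<Rightarrow> ('a \<Rightarrow> 'c) \<Rightarrow> bool" where
  "L_coloring W E L f \<longleftrightarrow> (\<forall>v\<in>W. f v \<in> L v) \<and> (\<forall>u\<in>W. \<forall>v\<in>W. E u v \<longrightarrow> f u \<noteq> f v)"

text \<open>n mod* k, the unique m in {1..k} with n \<equiv> m mod k.\<close>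
definition modstar :: "nat \<Rightarrow> nat \<Rightarrow> nat" where
  "modstar n k = (if n mod k = 0 then k else n mod k)"

definition ceil_div :: "nat \<Rightarrow> nat \<Rightarrow> nat" where
  "ceil_div n k = nat \<lceil>real n / real k\<rceil>"

definition color_class :: "'a set \<Rightarrow> ('a \<Rightarrow> 'c) \<Rightarrow> 'c \<Rightarrow> 'a set" where
  "color_class W f c = {v \<in> W. f v = c}"

definition SE_L_coloring :: "nat \<Rightarrow> 'a set \<Rightarrow> ('a \<Rightarrow> 'a \<Rightarrow> bool) \<Rightarrow> ('a \<Rightarrow> 'c set) \<Rightarrow> ('a \<Rightarrow> 'c) \<Rightarrow> bool" where
  "SE_L_coloring k W E L f \<longleftrightarrow> L_coloring W E L f \<and>
     (card W \<ge> 1 \<longrightarrow>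
        (\<forall>c. card (color_class W f c) \<le> ceil_div (card W) k) \<and>
        card {c. card (color_class W f c) = ceil_div (card W) k} \<le> modstar (card W) k)"

definition safe :: "nat \<Rightarrow> 'a set \<Rightarrow> ('a \<Rightarrow> 'a \<Rightarrow> bool) \<Rightarrow> ('a \<Rightarrow> 'c set) \<Rightarrow> 'a set \<Rightarrow> bool" where
  "safe k V E L S \<longleftrightarrow> (\<forall>f. SE_L_coloring k (V - S) E L f \<longrightarrow>
     (\<exists>g. SE_L_coloring k V E L g \<and> (\<forall>v \<in> V - S. g v = f v)))"

end

theory Submission
  imports Defs
begin


lemma ceil_div_char:
  assumes "k \<ge> 1" "1 \<le> t" "t \<le> k"
  shows "ceil_div (a*k+t) k = a+1" "modstar (a*k+t) k = t"
proof -
  have "real (a*k+t) / real k = real a + real t / real k"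
    using assms by (simp add: field_simps)
  moreover have "0 < real t / real k" "real t / real k \<le> 1" using assms by auto
  ultimately have "\<lceil>real (a*k+t) / real k\<rceil> = int a + 1"
    by (intro ceiling_unique) auto
  then show "ceil_div (a*k+t) k = a+1" unfolding ceil_div_def by simp
  show "modstar (a*k+t) k = t"
  proof (cases "t = k")
    case True then show ?thesis unfolding modstar_def by simp
  next
    case False then have "t < k" using assms by simp
    then show ?thesis unfolding modstar_def using assms by simp
  qed
qed

lemma ceil_div_decomp:
  assumes "k \<ge> 1" "n \<ge> 1"
  obtains a t where "n = a*k+t" "1 \<le> t" "t \<le> k" "ceil_div n k = a+1" "modstar n k = t"
proof -
  define a where "a = (n-1) div k"
  define t where "t = (n-1) mod k + 1"
  have "(n-1) = a * k + (n-1) mod k" unfolding a_def by simp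
  then have n: "n = a*k+t" unfolding t_def using assms by linarith
  have t: "1 \<le> t" "t \<le> k" unfolding t_def using assms
    by (auto simp: Suc_le_eq)
  show ?thesis using that[OF n t ceil_div_char[OF assms(1) t, of a, folded n]] .
qed

lemma extend_inj:
  assumes "finite T" "inj_on g T" "\<forall>v\<in>T. g v \<in> A v" "x \<notin> T" "finite (A x)" "card T < card (A x)"
  shows "\<exists>h. inj_on h (insert x T) \<and> (\<forall>v\<in>insert x T. h v \<in> A v)"
proof -
  have "card (g ` T) \<le> card T" by (rule card_image_le) fact
  then have "\<not> A x \<subseteq> g ` T" using assms card_mono by (metis finite_imageI leD le_less_trans)
  then obtain c where c: "c \<in> A x" "c \<notin> g ` T" by blast
  have "inj_on (g(x := c)) (insert x T)" using assms(2,4) c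
    by (auto simp: inj_on_def)
  moreover have "\<forall>v\<in>insert x T. (g(x := c)) v \<in> A v" using assms(3,4) c by auto
  ultimately show ?thesis by blast
qed

lemma choose_inj:
  "finite T \<Longrightarrow> (\<forall>v\<in>T. finite (A v)) \<Longrightarrow> (\<forall>v\<in>T. A v \<noteq> {}) \<Longrightarrow>
   (\<forall>v\<in>T-{r}. card T \<le> card (A v)) \<Longrightarrow> \<exists>g. inj_on g T \<and> (\<forall>v\<in>T. g v \<in> A v)"
proof (induction "card T" arbitrary: T)
  case 0
  then show ?case by auto
next
  case (Suc n)
  show ?case
  proof (cases "T - {r} = {}")
    case True
    then have "T = {r}" using Suc.hyps(2) by (metis card.empty Diff_eq_empty_iff nat.distinct(1) subset_singletonD)
    then obtain c where "c \<in> A r" using Suc.prems by auto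
    then show ?thesis using \<open>T = {r}\<close> by (intro exI[of _ "\<lambda>_. c"]) auto
  next
    case False
    then obtain x where x: "x \<in> T" "x \<noteq> r" by auto
    let ?T = "T - {x}"
    have c: "n = card ?T" using Suc.hyps(2) x Suc.prems(1) by simp
    have le: "card ?T \<le> card T" using Suc.prems(1) by (simp add: card_mono)
    have p1: "finite ?T" using Suc.prems(1) by simp
    have p2: "\<forall>v\<in>?T. finite (A v)" using Suc.prems(2) by simp
    have p3: "\<forall>v\<in>?T. A v \<noteq> {}" using Suc.prems(3) by simp
    have p4: "\<forall>v\<in>?T-{r}. card ?T \<le> card (A v)"
    proof
      fix v assume "v \<in> ?T-{r}"
      then have "card T \<le> card (A v)" using Suc.prems(4) by simp
      then show "card ?T \<le> card (A v)" using le by linarith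
    qed
    have "\<exists>g. inj_on g ?T \<and> (\<forall>v\<in>?T. g v \<in> A v)"
      by (rule Suc.hyps(1)[OF c p1 p2 p3 p4])
    then obtain g where g: "inj_on g ?T" "\<forall>v\<in>?T. g v \<in> A v" by blast
    have "\<exists>h. inj_on h (insert x ?T) \<and> (\<forall>v\<in>insert x ?T. h v \<in> A v)"
      apply (rule extend_inj[OF _ g])
    proof -
      have "card T \<le> card (A x)" using Suc.prems(4) x by simp
      then show "card ?T < card (A x)" using Suc.hyps(2) c by linarith
    qed (use Suc.prems x in auto)
    then show ?thesis using x by (simp add: insert_absorb)
  qed
qed

lemma class_card:
  assumes "finite V" "S \<subseteq> V" "\<forall>v\<in>V-S. g v = f v" "inj_on g S"
  shows "card (color_class V g c) = card (color_class (V-S) f c) + (if c \<in> g ` S then 1 else 0)"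
proof -
  have eq: "color_class V g c = color_class (V-S) f c \<union> {v\<in>S. g v = c}"
  proof (rule set_eqI)
    fix x show "x \<in> color_class V g c \<longleftrightarrow> x \<in> color_class (V-S) f c \<union> {v\<in>S. g v = c}"
      using assms(2,3) unfolding color_class_def by (cases "x \<in> S") auto
  qed
  have d: "color_class (V-S) f c \<inter> {v\<in>S. g v = c} = {}" unfolding color_class_def by auto
  have f1: "finite (color_class (V-S) f c)" using assms(1) unfolding color_class_def by auto
  have f2: "finite {v\<in>S. g v = c}" proof -
    have "finite S" using assms(1,2) by (rule finite_subset[rotated])
    then show ?thesis by simp
  qed
  have c2: "card {v\<in>S. g v = c} = (if c \<in> g ` S then 1 else 0)"
  proof (cases "c \<in> g ` S")
    case True then obtain w where w: "w \<in> S" "g w = c" by auto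
    then have "{v\<in>S. g v = c} = {w}" using assms(4) unfolding inj_on_def by auto
    then show ?thesis using True by simp
  next
    case False then have e: "{v\<in>S. g v = c} = {}" by auto
    show ?thesis unfolding e using False by simp
  qed
  show ?thesis by (simp add: eq card_Un_disjoint[OF f1 f2 d] c2)
qed



theorem corollary4p2:
  fixes V :: "'a set" and E :: "'a \<Rightarrow> 'a \<Rightarrow> bool" and L :: "'a \<Rightarrow> 'c set"
    and k :: nat and S :: "'a set" and r :: 'a
  assumes "k \<ge> 3"
    and "simple_graph V E"
    and "k_list_assignment V k L"
    and "is_bug V E S r"
    and "degree V E r \<le> k"
    and "card (nbrs V E r - S) < card S"
    and "card S \<le> k"
    and "\<exists>y. hidden V E S y"
  shows "safe k V E L S"
  unfolding safe_def
proof (intro allI impI)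
  fix f :: "'a \<Rightarrow> 'c"
  assume fSE: "SE_L_coloring k (V - S) E L f"
  have k3: "k \<ge> 3" using assms(1) .
  from assms(2) have finV: "finite V" and sym: "\<And>u v. E u v \<Longrightarrow> E v u" and irr: "\<And>v. \<not> E v v"
    and inV: "\<And>u v. E u v \<Longrightarrow> u \<in> V \<and> v \<in> V" unfolding simple_graph_def by auto
  from assms(4) have SV: "S \<subseteq> V" and rS: "r \<in> S" and conn: "induced_connected E S"
    and low: "S \<inter> V3plus V E \<subseteq> {r}" unfolding is_bug_def by auto
  have finS: "finite S" using finV SV by (rule finite_subset[rotated])
  define s where "s = card S"
  define m where "m = card (V - S)"
  have "S \<noteq> {}" using rS by blast
  then have s1: "1 \<le> s" unfolding s_def using finS by (simp add: Suc_le_eq card_gt_0_iff)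
  have sk: "s \<le> k" using assms(7) s_def by simp
  have nV: "card V = m + s" unfolding m_def s_def using SV finS finV
    by (simp add: card_Diff_subset card_mono)
  have fcol: "L_coloring (V - S) E L f" using fSE unfolding SE_L_coloring_def by simp
  define cf where "cf c = card (color_class (V-S) f c)" for c
  have good: "\<exists>X. finite X \<and> card X + s \<le> k \<and> (\<forall>g. (\<forall>v\<in>V-S. g v = f v) \<longrightarrow> inj_on g S \<longrightarrow> g ` S \<inter> X = {} \<longrightarrow>
      (\<forall>c. card (color_class V g c) \<le> ceil_div (card V) k) \<and>
      card {c. card (color_class V g c) = ceil_div (card V) k} \<le> modstar (card V) k)"
  proof (cases "m = 0")
    case True
    then have VS: "V - S = {}" using finV m_def by simp
    have cd: "ceil_div (card V) k = 1" "modstar (card V) k = s"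
      using ceil_div_char[of k s 0] s1 sk k3 nV True by auto
    have "\<forall>g. (\<forall>v\<in>V-S. g v = f v) \<longrightarrow> inj_on g S \<longrightarrow> g ` S \<inter> {} = {} \<longrightarrow>
      (\<forall>c. card (color_class V g c) \<le> ceil_div (card V) k) \<and>
      card {c. card (color_class V g c) = ceil_div (card V) k} \<le> modstar (card V) k"
    proof (intro allI impI)
      fix g :: "'a \<Rightarrow> 'c" assume ag: "\<forall>v\<in>V-S. g v = f v" and inj: "inj_on g S"
      have cc: "card (color_class V g c) = (if c \<in> g ` S then 1 else 0)" for c
        using class_card[OF finV SV ag inj, of c] VS unfolding color_class_def by simp
      have e: "{c. card (color_class V g c) = ceil_div (card V) k} = g ` S" using cc cd by auto
      have "card (g ` S) = s" using card_image[OF inj] s_def by simp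
      then show "(\<forall>c. card (color_class V g c) \<le> ceil_div (card V) k) \<and>
      card {c. card (color_class V g c) = ceil_div (card V) k} \<le> modstar (card V) k"
        using cc cd e by simp
    qed
    then show ?thesis using sk by (intro exI[of _ "{}"]) simp
  next
    case False
    then have m1: "1 \<le> m" by simp
    from fSE m1 have fle: "\<forall>c. cf c \<le> ceil_div m k" and fF: "card {c. cf c = ceil_div m k} \<le> modstar m k"
      unfolding SE_L_coloring_def cf_def m_def by auto
    obtain a t' where m: "m = a*k+t'" "1 \<le> t'" "t' \<le> k" "ceil_div m k = a+1" "modstar m k = t'"
      using ceil_div_decomp[of k m] k3 m1 by auto
    define F where "F = {c. cf c = a+1}"
    have FS: "F \<subseteq> f ` (V-S)"
    proof
      fix c assume "c \<in> F"
      then have "card (color_class (V-S) f c) \<noteq> 0" unfolding F_def cf_def by simp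
      then have "color_class (V-S) f c \<noteq> {}" by auto
      then obtain v where "v \<in> V - S" "f v = c" unfolding color_class_def by auto
      then show "c \<in> f ` (V-S)" by auto
    qed
    have finF: "finite F" using FS finV by (meson finite_Diff finite_imageI finite_subset)
    have cardF: "card F \<le> t'" using fF m unfolding F_def by simp
    have fle': "cf c \<le> a+1" for c using fle m by simp
    have cardVeq: "card V = a*k + (t'+s)" using nV m by simp
    have cc: "card (color_class V g c) = cf c + (if c \<in> g ` S then 1 else 0)"
      if "\<forall>v\<in>V-S. g v = f v" "inj_on g S" for g c
      using class_card[OF finV SV that, of c] unfolding cf_def by simp
    show ?thesis
    proof (cases "t' + s \<le> k")
      case True
      have cd: "ceil_div (card V) k = a+1" "modstar (card V) k = t'+s"
        using ceil_div_char[of k "t'+s" a] True k3 m cardVeq by auto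
      have "\<forall>g. (\<forall>v\<in>V-S. g v = f v) \<longrightarrow> inj_on g S \<longrightarrow> g ` S \<inter> F = {} \<longrightarrow>
        (\<forall>c. card (color_class V g c) \<le> ceil_div (card V) k) \<and>
        card {c. card (color_class V g c) = ceil_div (card V) k} \<le> modstar (card V) k"
      proof (intro allI impI)
        fix g :: "'a \<Rightarrow> 'c" assume ag: "\<forall>v\<in>V-S. g v = f v" and inj: "inj_on g S"
          and dis: "g ` S \<inter> F = {}"
        have b: "card (color_class V g c) \<le> a+1" for c
        proof (cases "c \<in> g ` S")
          case True
          then have "c \<notin> F" using dis by auto
          then have "cf c < a+1" using fle'[of c] unfolding F_def by simp
          then show ?thesis using cc[OF ag inj, of c] by simp
        next
          case False
          then show ?thesis using cc[OF ag inj, of c] fle'[of c] by simp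
        qed
        have sub: "{c. card (color_class V g c) = a+1} \<subseteq> F \<union> g ` S"
        proof
          fix c assume "c \<in> {c. card (color_class V g c) = a+1}"
          then show "c \<in> F \<union> g ` S" using cc[OF ag inj, of c] unfolding F_def by (cases "c \<in> g ` S") auto
        qed
        have "card {c. card (color_class V g c) = a+1} \<le> card (F \<union> g ` S)"
          by (rule card_mono) (use finF finS sub in auto)
        also have "\<dots> \<le> card F + card (g ` S)" by (rule card_Un_le)
        also have "\<dots> \<le> t' + s" using cardF card_image_le[OF finS, of g] s_def by simp
        finally show "(\<forall>c. card (color_class V g c) \<le> ceil_div (card V) k) \<and>
          card {c. card (color_class V g c) = ceil_div (card V) k} \<le> modstar (card V) k"
          using b cd by simp
      qed
      then show ?thesis using finF cardF True by (intro exI[of _ F]) simp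
    next
      case False
      have cd: "ceil_div (card V) k = a+2" "modstar (card V) k = t'+s-k"
        using ceil_div_char[of k "t'+s-k" "a+1"] False k3 m cardVeq sk
        by (auto simp: algebra_simps)
      obtain X where X: "X \<subseteq> F" "card (F - X) \<le> t'+s-k" "card X + s \<le> k"
      proof (cases "card F \<le> t'+s-k")
        case True
        then show ?thesis using that[of "{}"] sk by simp
      next
        case False
        obtain X where "X \<subseteq> F" "card X = card F - (t'+s-k)"
          using obtain_subset_with_card_n[of "card F - (t'+s-k)" F] by auto
        moreover have "card (F - X) = card F - card X"
          using calculation finF by (meson card_Diff_subset finite_subset)
        ultimately show ?thesis using that[of X] False cardF by simp
      qed
      have finX: "finite X" using X(1) finF finite_subset by auto
      have "\<forall>g. (\<forall>v\<in>V-S. g v = f v) \<longrightarrow> inj_on g S \<longrightarrow> g ` S \<inter> X = {} \<longrightarrow>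
        (\<forall>c. card (color_class V g c) \<le> ceil_div (card V) k) \<and>
        card {c. card (color_class V g c) = ceil_div (card V) k} \<le> modstar (card V) k"
      proof (intro allI impI)
        fix g :: "'a \<Rightarrow> 'c" assume ag: "\<forall>v\<in>V-S. g v = f v" and inj: "inj_on g S"
          and dis: "g ` S \<inter> X = {}"
        have b: "card (color_class V g c) \<le> a+2" for c
          using cc[OF ag inj, of c] fle'[of c] by simp
        have sub: "{c. card (color_class V g c) = a+2} \<subseteq> F - X"
        proof
          fix c assume "c \<in> {c. card (color_class V g c) = a+2}"
          then have "cf c = a+1" "c \<in> g ` S" using cc[OF ag inj, of c] fle'[of c]
            by (cases "c \<in> g ` S"; simp)+
          then show "c \<in> F - X" using dis unfolding F_def by auto
        qed
        have "card {c. card (color_class V g c) = a+2} \<le> card (F - X)"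
          by (rule card_mono) (use finF sub in auto)
        also have "\<dots> \<le> t' + s - k" using X by simp
        finally show "(\<forall>c. card (color_class V g c) \<le> ceil_div (card V) k) \<and>
          card {c. card (color_class V g c) = ceil_div (card V) k} \<le> modstar (card V) k"
          using b cd by simp
      qed
      then show ?thesis using finX X by (intro exI[of _ X]) simp
    qed
  qed
  then obtain X where finX: "finite X" and Xs: "card X + s \<le> k" and goodX:
    "\<forall>g. (\<forall>v\<in>V-S. g v = f v) \<longrightarrow> inj_on g S \<longrightarrow> g ` S \<inter> X = {} \<longrightarrow>
      (\<forall>c. card (color_class V g c) \<le> ceil_div (card V) k) \<and>
      card {c. card (color_class V g c) = ceil_div (card V) k} \<le> modstar (card V) k"
    by (elim exE conjE)
  define A where "A v = L v - X - f ` (nbrs V E v - S)" for v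
  have Lv: "finite (L v)" "card (L v) = k" if "v \<in> V" for v
    using assms(3) that unfolding k_list_assignment_def by auto
  have finN: "finite (nbrs V E v - S)" for v
    using finV unfolding nbrs_def by simp
  have finA: "finite (A v)" if "v \<in> S" for v using Lv that SV unfolding A_def by auto
  have Abound: "s \<le> card (A v) + card (nbrs V E v - S)" if "v \<in> S" for v
  proof -
    have c1: "card (L v) - card X \<le> card (L v - X)" by (rule diff_card_le_card_Diff) (rule finX)
    have c2: "card (L v - X) - card (f ` (nbrs V E v - S)) \<le> card (A v)"
      unfolding A_def by (rule diff_card_le_card_Diff) (simp add: finN)
    have c3: "card (f ` (nbrs V E v - S)) \<le> card (nbrs V E v - S)" by (rule card_image_le) (rule finN)
    have "card (L v) = k" using Lv that SV by auto
    then show ?thesis using c1 c2 c3 Xs by linarith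
  qed
  have out_r: "card (nbrs V E r - S) < s" using assms(6) s_def by simp
  obtain y where hy: "hidden V E S y" using assms(8) by blast
  then have yS: "y \<in> S" and yN: "nbrs V E y \<subseteq> S" unfolding hidden_def by auto
  have e0: "nbrs V E y - S = {}" using yN by blast
  have Ay: "s \<le> card (A y)" using Abound[OF yS] unfolding e0 by simp
  have two: "2 \<le> s" if "v \<in> S" "u \<in> S" "u \<noteq> v" for u v
  proof -
    have "card {u, v} \<le> card S" using that finS by (intro card_mono) auto
    then show ?thesis using that s_def by simp
  qed
  have out_o: "card (nbrs V E v - S) \<le> 1" if vS: "v \<in> S" and vr: "v \<noteq> r" and s2: "2 \<le> s" for v
  proof -
    have vV: "v \<in> V" using vS SV by auto
    have "v \<notin> V3plus V E" using low vS vr by auto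
    then have dg: "card (nbrs V E v) \<le> 2" using vV unfolding V3plus_def degree_def by simp
    obtain u where u: "u \<in> S" "u \<noteq> v"
    proof (rule ccontr)
      assume "\<not> thesis"
      then have "S \<subseteq> {v}" using that by auto
      then have "card S \<le> 1" using card_mono[of "{v}" S] by simp
      then show False using s2 s_def by simp
    qed
    let ?R = "\<lambda>x y. E x y \<and> x \<in> S \<and> y \<in> S"
    have "?R\<^sup>*\<^sup>* v u" using conn vS u(1) unfolding induced_connected_def by blast
    then obtain w where w: "E v w" "w \<in> S"
      using u(2) by (cases rule: converse_rtranclpE) auto
    have wN: "w \<in> nbrs V E v" using w SV unfolding nbrs_def by auto
    have fN: "finite (nbrs V E v)" using finV unfolding nbrs_def by simp
    have "nbrs V E v - S \<subseteq> nbrs V E v - {w}" using w by auto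
    then have "card (nbrs V E v - S) \<le> card (nbrs V E v - {w})" using fN by (intro card_mono) auto
    also have "\<dots> = card (nbrs V E v) - 1" using wN fN by simp
    finally show ?thesis using dg by simp
  qed
  let ?T = "S - {y}"
  have cT: "card ?T = s - 1" using yS finS s_def by simp
  have "\<exists>g0. inj_on g0 ?T \<and> (\<forall>v\<in>?T. g0 v \<in> A v)"
  proof (rule choose_inj[of ?T A r])
    show "finite ?T" using finS by simp
    show "\<forall>v\<in>?T. finite (A v)" using finA by simp
    show "\<forall>v\<in>?T. A v \<noteq> {}"
    proof
      fix v assume v: "v \<in> ?T"
      show "A v \<noteq> {}"
      proof (cases "v = r")
        case True
        then have "0 < card (A v)" using Abound[of r] rS out_r by simp
        then show ?thesis by auto
      next
        case False
        have "2 \<le> s" using two[of v y] v yS by auto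
        then have "0 < card (A v)" using Abound[of v] out_o[of v] v False by simp
        then show ?thesis by auto
      qed
    qed
    show "\<forall>v\<in>?T - {r}. card ?T \<le> card (A v)"
    proof
      fix v assume v: "v \<in> ?T - {r}"
      have "2 \<le> s" using two[of v y] v yS by auto
      then show "card ?T \<le> card (A v)" using Abound[of v] out_o[of v] v cT by simp
    qed
  qed
  then obtain g1 where g1: "inj_on g1 ?T" "\<forall>v\<in>?T. g1 v \<in> A v" by blast
  have "\<exists>h. inj_on h (insert y ?T) \<and> (\<forall>v\<in>insert y ?T. h v \<in> A v)"
    by (rule extend_inj[OF _ g1]) (use finS finA[OF yS] Ay cT s1 in auto)
  then obtain g0 where g0: "inj_on g0 S" "\<forall>v\<in>S. g0 v \<in> A v"
    using yS by (auto simp: insert_absorb)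
  define g where "g v = (if v \<in> S then g0 v else f v)" for v
  have ag: "\<forall>v\<in>V-S. g v = f v" unfolding g_def by simp
  have inj: "inj_on g S" using g0(1) unfolding g_def inj_on_def by simp
  have dis: "g ` S \<inter> X = {}" using g0(2) unfolding g_def A_def by auto
  have Lcol: "L_coloring V E L g"
    unfolding L_coloring_def
  proof (intro conjI ballI impI)
    fix v assume "v \<in> V"
    then show "g v \<in> L v" using g0(2) fcol unfolding g_def A_def L_coloring_def by auto
  next
    fix u v assume u: "u \<in> V" and v: "v \<in> V" and e: "E u v"
    show "g u \<noteq> g v"
    proof (cases "u \<in> S"; cases "v \<in> S")
      assume "u \<in> S" "v \<in> S"
      moreover have "u \<noteq> v" using e irr by auto
      ultimately show ?thesis using g0(1) unfolding g_def inj_on_def by auto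
    next
      assume us: "u \<in> S" and vs: "v \<notin> S"
      have vn: "v \<in> nbrs V E u - S" using v e vs unfolding nbrs_def by simp
      have "g0 u \<notin> f ` (nbrs V E u - S)" using g0(2) us unfolding A_def by blast
      then have "g0 u \<noteq> f v" using vn by blast
      then show ?thesis using us vs unfolding g_def by simp
    next
      assume us: "u \<notin> S" and vs: "v \<in> S"
      have un: "u \<in> nbrs V E v - S" using u sym[OF e] us unfolding nbrs_def by simp
      have "g0 v \<notin> f ` (nbrs V E v - S)" using g0(2) vs unfolding A_def by blast
      then have "g0 v \<noteq> f u" using un by blast
      then show ?thesis using us vs unfolding g_def by simp
    next
      assume "u \<notin> S" "v \<notin> S"
      then show ?thesis using fcol u v e unfolding g_def L_coloring_def by auto
    qed
  qed
  have "SE_L_coloring k V E L g"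
    unfolding SE_L_coloring_def using Lcol goodX ag inj dis by blast
  then show "\<exists>g. SE_L_coloring k V E L g \<and> (\<forall>v\<in>V - S. g v = f v)" using ag by blast
qed

end
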